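(* Let $\mathcal{A}$ be a complex Banach algebra with identity, $\lambda$ a nonzero complex number, and $M = \begin{pmatrix} A & B \\ C & D \end{pmatrix} \in M_2(\mathcal{A})$ with $A, D \in \mathcal{A}^d$. If $$AB = \lambda A^\pi B D,\quad DC = 0,\quad BC = 0,$$ then $M \in M_2(\mathcal{A})^d$ and $$M^d = \begin{pmatrix} A^d & 0 \\ 0 & D^d \end{pmatrix} + \sum_{n=0}^{\infty} M^n Q (P^d)^{n+2},$$ where $Q = \begin{pmatrix} 0 & B \\ C & 0 \end{pmatrix}$ and $P^d = \begin{pmatrix} A^d & 0 \\ 0 & D^d \end{pmatrix}$.
   Context: $M_2(\mathcal{A})$ is the Banach algebra of $2\times 2$ matrices over $\mathcal{A}$. An element $x$ of a Banach algebra has a generalized Drazin (g-Drazin) inverse $x^d$ if $x^d$ commutes with $x$, $x^d = x^dxx^d$ and $x - x^2x^d$ is quasinilpotent (i.e. $\lim\|y^n\|^{1/n}=0$ for $y=x-x^2x^d$); $\mathcal{A}^d$ (resp. $M_2(\mathcal{A})^d$) denotes the set of g-Drazin invertible elements. The spectral idempotent is $x^\pi = 1 - xx^d$. *)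

theory Defs
  imports "HOL-Analysis.Analysis"
begin

class complex_banach_algebra_1 = real_normed_algebra_1 + banach +
  fixes scaleC :: "complex \<Rightarrow> 'a \<Rightarrow> 'a"  (infixr \<open>*\<^sub>C\<close> 75)
  assumes scaleC_of_real: "scaleC (of_real r) x = scaleR r x"
    and scaleC_add_right: "scaleC c (x + y) = scaleC c x + scaleC c y"
    and scaleC_add_left: "scaleC (c + d) x = scaleC c x + scaleC d x"
    and scaleC_scaleC: "scaleC c (scaleC d x) = scaleC (c * d) x"
    and scaleC_one: "scaleC 1 x = x"
    and norm_scaleC: "norm (scaleC c x) = cmod c * norm x"
    and mult_scaleC_left: "scaleC c x * y = scaleC c (x * y)"
    and mult_scaleC_right: "x * scaleC c y = scaleC c (x * y)"

definition quasinilpotent :: "'a::real_normed_algebra_1 \<Rightarrow> bool" where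
  "quasinilpotent y \<longleftrightarrow> (\<lambda>n. root n (norm (y ^ n))) \<longlonglongrightarrow> 0"

definition is_gdrazin_inv :: "'a::real_normed_algebra_1 \<Rightarrow> 'a \<Rightarrow> bool" where
  "is_gdrazin_inv x xd \<longleftrightarrow>
     xd * x = x * xd \<and> xd = xd * x * xd \<and> quasinilpotent (x - x\<^sup>2 * xd)"

definition gdrazin_invertible :: "'a::real_normed_algebra_1 \<Rightarrow> bool" where
  "gdrazin_invertible x \<longleftrightarrow> (\<exists>xd. is_gdrazin_inv x xd)"

text \<open>The g-Drazin inverse (unique when it exists) and the spectral idempotent.\<close>
definition gdrazin :: "'a::real_normed_algebra_1 \<Rightarrow> 'a" where
  "gdrazin x = (THE xd. is_gdrazin_inv x xd)"

definition spec_idem :: "'a::real_normed_algebra_1 \<Rightarrow> 'a" where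
  "spec_idem x = 1 - x * gdrazin x"

text \<open>2x2 matrices over \<open>\<A>\<close>: \<open>(a, b, c, d)\<close> stands for the matrix with rows
  \<open>(a b)\<close> and \<open>(c d)\<close>. The product type carries the (complete) product norm,
  which is equivalent to any Banach algebra norm on \<open>M\<^sub>2(\<A>)\<close>.\<close>
type_synonym 'a mat2 = "'a \<times> 'a \<times> 'a \<times> 'a"

fun m2mult :: "'a::ring_1 mat2 \<Rightarrow> 'a mat2 \<Rightarrow> 'a mat2" where
  "m2mult (a, b, c, d) (e, f, g, h) =
     (a * e + b * g, a * f + b * h, c * e + d * g, c * f + d * h)"

definition m2one :: "'a::ring_1 mat2" where
  "m2one = (1, 0, 0, 1)"

primrec m2pow :: "'a::ring_1 mat2 \<Rightarrow> nat \<Rightarrow> 'a mat2" where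
  "m2pow M 0 = m2one"
| "m2pow M (Suc n) = m2mult M (m2pow M n)"

definition m2_quasinilpotent :: "'a::real_normed_algebra_1 mat2 \<Rightarrow> bool" where
  "m2_quasinilpotent Y \<longleftrightarrow> (\<lambda>n. root n (norm (m2pow Y n))) \<longlonglongrightarrow> 0"

definition m2_is_gdrazin_inv :: "'a::real_normed_algebra_1 mat2 \<Rightarrow> 'a mat2 \<Rightarrow> bool" where
  "m2_is_gdrazin_inv X Xd \<longleftrightarrow>
     m2mult Xd X = m2mult X Xd \<and> Xd = m2mult (m2mult Xd X) Xd \<and>
     m2_quasinilpotent (X - m2mult (m2pow X 2) Xd)"

definition m2_gdrazin_invertible :: "'a::real_normed_algebra_1 mat2 \<Rightarrow> bool" where
  "m2_gdrazin_invertible X \<longleftrightarrow> (\<exists>Xd. m2_is_gdrazin_inv X Xd)"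

definition m2_gdrazin :: "'a::real_normed_algebra_1 mat2 \<Rightarrow> 'a mat2" where
  "m2_gdrazin X = (THE Xd. m2_is_gdrazin_inv X Xd)"

end

theory Submission
  imports Defs
begin


definition dec :: "(nat \<Rightarrow> real) \<Rightarrow> bool" where
  "dec f \<longleftrightarrow> (\<forall>\<epsilon>>0. \<exists>C. \<forall>n. f n \<le> C * \<epsilon>^n)"

lemma dec_from_root:
  assumes lim: "(\<lambda>n. root n (f n)) \<longlonglongrightarrow> 0" and nn: "\<And>n. 0 \<le> f n"
  shows "dec f"
  unfolding dec_def
proof (intro allI impI)
  fix \<epsilon> :: real assume e: "\<epsilon> > 0"
  from lim have "eventually (\<lambda>n. dist (root n (f n)) 0 < \<epsilon>) sequentially"
    using e by (rule tendstoD)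
  then obtain N where N0: "\<forall>n\<ge>N. \<bar>root n (f n)\<bar> < \<epsilon>"
    by (auto simp: eventually_sequentially)
  hence N: "\<And>n. n \<ge> N \<Longrightarrow> root n (f n) < \<epsilon>" by (simp add: abs_less_iff)
  have big: "f n \<le> \<epsilon>^n" if "n \<ge> Suc N" for n
  proof -
    have n0: "0<n" using that by simp
    have "root n (f n) \<le> \<epsilon>" using N[of n] that by simp
    hence "root n (f n)^n \<le> \<epsilon>^n" by (rule power_mono) (simp add: nn real_root_ge_zero)
    thus ?thesis using n0 nn by simp
  qed
  define C where "C = 1 + (\<Sum>k<Suc N. f k / \<epsilon>^k)"
  have C1: "C \<ge> 1" unfolding C_def using nn e by (smt (verit) divide_nonneg_pos sum_nonneg zero_less_power)
  show "\<exists>C. \<forall>n. f n \<le> C * \<epsilon>^n"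
  proof (intro exI allI)
    fix n
    show "f n \<le> C * \<epsilon>^n"
    proof (cases "n \<ge> Suc N")
      case True then have "f n \<le> \<epsilon>^n" by (rule big)
      also have "\<dots> \<le> C * \<epsilon>^n" using C1 e by simp
      finally show ?thesis .
    next
      case False then have "n \<in> {..<Suc N}" by simp
      hence "f n / \<epsilon>^n \<le> (\<Sum>k<Suc N. f k / \<epsilon>^k)"
        by (rule member_le_sum[where f="\<lambda>k. f k / \<epsilon>^k"]) (use nn e in auto)
      hence "f n / \<epsilon>^n \<le> C" unfolding C_def by simp
      thus ?thesis using e by (simp add: pos_divide_le_eq)
    qed
  qed
qed

lemma root_from_dec:
  assumes d: "dec f" and nn: "\<And>n. 0 \<le> f n"
  shows "(\<lambda>n. root n (f n)) \<longlonglongrightarrow> 0"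
proof (rule LIMSEQ_I)
  fix r :: real assume r: "r > 0"
  obtain C where C: "\<And>n. f n \<le> C * (r/4)^n" using d r unfolding dec_def
    by (metis divide_pos_pos zero_less_numeral)
  obtain N where N: "max C 1 < 2^N" using real_arch_pow[of 2 "max C 1"] by auto
  show "\<exists>no. \<forall>n\<ge>no. norm (root n (f n) - 0) < r"
  proof (intro exI allI impI)
    fix n assume n: "n \<ge> Suc N"
    then have n0: "0<n" by simp
    have "(2::real)^N \<le> 2^n" using n by (intro power_increasing) auto
    hence C2: "C \<le> 2^n" using N by linarith
    have "f n \<le> C * (r/4)^n" by (rule C)
    also have "\<dots> \<le> 2^n * (r/4)^n" using C2 r by (intro mult_right_mono) auto
    also have "\<dots> = (r/2)^n" by (simp add: power_mult_distrib[symmetric])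
    finally have "f n \<le> (r/2)^n" .
    hence "root n (f n) \<le> root n ((r/2)^n)" using n0 by (rule real_root_le_mono[rotated])
    also have "root n ((r/2)^n) = r/2" using n0 r by (intro real_root_pos_unique) auto
    finally have "root n (f n) \<le> r/2" .
    moreover have "0 \<le> root n (f n)" using nn by (simp add: real_root_ge_zero)
    ultimately show "norm (root n (f n) - 0) < r" using r by simp
  qed
qed

lemma zero_of_bound:
  fixes x :: real
  assumes "\<And>n. x \<le> c * (1/2)^n" "x \<ge> 0"
  shows "x = 0"
proof (rule ccontr)
  assume "x \<noteq> 0" hence xp: "x > 0" using assms(2) by simp
  have c: "c \<ge> x" using assms(1)[of 0] by simp
  hence cp: "c > 0" using xp by simp
  obtain n where "(1/2::real)^n < x / c" using real_arch_pow_inv[of "x/c" "1/2"] xp cp by auto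
  hence "c * (1/2)^n < x" using cp by (simp add: field_simps)
  with assms(1)[of n] show False by simp
qed



locale nalg =
  fixes mul :: "'b::real_normed_vector \<Rightarrow> 'b \<Rightarrow> 'b" and one :: 'b and K :: real
  assumes assoc: "mul (mul x y) z = mul x (mul y z)"
    and one_l: "mul one x = x" and one_r: "mul x one = x"
    and distl: "mul x (y + z) = mul x y + mul x z"
    and distr: "mul (x + y) z = mul x z + mul y z"
    and Kpos: "0 < K" and normK: "norm (mul x y) \<le> K * norm x * norm y"
begin

lemma zero_l[simp]: "mul 0 x = 0"
  using distr[of 0 0 x] by simp
lemma zero_r[simp]: "mul x 0 = 0"
  using distl[of x 0 0] by simp
lemma diffl: "mul x (y - z) = mul x y - mul x z"
  using distl[of x "y - z" z] by simp
lemma diffr: "mul (x - y) z = mul x z - mul y z"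
  using distr[of "x - y" y z] by simp

primrec pw where "pw x 0 = one" | "pw x (Suc n) = mul x (pw x n)"

lemma pw_comm: "mul (pw x n) x = mul x (pw x n)"
  by (induction n) (simp_all add: one_l one_r assoc)

lemma pw_Suc2: "pw x (Suc n) = mul (pw x n) x"
  by (simp add: pw_comm)

lemma norm_pw: "norm (pw x n) \<le> norm one * (K * norm x)^n"
proof (induction n)
  case 0 then show ?case by simp
next
  case (Suc n)
  have "norm (pw x (Suc n)) \<le> K * norm x * norm (pw x n)" using normK by simp
  also have "\<dots> \<le> K * norm x * (norm one * (K * norm x)^n)"
    using Suc Kpos by (intro mult_left_mono) auto
  finally show ?case by (simp add: algebra_simps)
qed

definition qnil where "qnil q \<longleftrightarrow> (\<lambda>n. root n (norm (pw q n))) \<longlonglongrightarrow> 0"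
definition gd where
  "gd x y \<longleftrightarrow> mul y x = mul x y \<and> y = mul (mul y x) y \<and> qnil (x - mul (pw x 2) y)"

lemma qnil_dec: "qnil q \<longleftrightarrow> dec (\<lambda>n. norm (pw q n))"
  unfolding qnil_def using dec_from_root root_from_dec by (metis norm_ge_zero)

lemma iter: "s = mul (mul y s) q \<Longrightarrow> s = mul (mul (pw y n) s) (pw q n)"
proof (induction n)
  case 0 then show ?case by (simp add: one_l one_r)
next
  case (Suc n)
  have "s = mul (mul y s) q" by (rule Suc.prems)
  also have "\<dots> = mul (mul y (mul (mul (pw y n) s) (pw q n))) q" using Suc by simp
  also have "\<dots> = mul (mul (mul y (pw y n)) s) (mul (pw q n) q)" by (simp add: assoc)
  also have "\<dots> = mul (mul (pw y (Suc n)) s) (pw q (Suc n))" by (simp add: pw_comm)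
  finally show ?case .
qed

lemma iter': "s = mul (mul q s) y \<Longrightarrow> s = mul (mul (pw q n) s) (pw y n)"
proof (induction n)
  case 0 then show ?case by (simp add: one_l one_r)
next
  case (Suc n)
  have "s = mul (mul q s) y" by (rule Suc.prems)
  also have "\<dots> = mul (mul q (mul (mul (pw q n) s) (pw y n))) y" using Suc by simp
  also have "\<dots> = mul (mul (mul q (pw q n)) s) (mul (pw y n) y)" by (simp add: assoc)
  also have "\<dots> = mul (mul (pw q (Suc n)) s) (pw y (Suc n))" by (simp add: pw_comm)
  finally show ?case .
qed

lemma bound_zero:
  assumes qn: "qnil q" and eq: "\<And>n. norm s \<le> K * (K * norm (pw y n) * norm s) * norm (pw q n)"
  shows "s = 0"
proof -
  define R where "R = K * norm y + 1"
  have R: "R > 0" unfolding R_def using Kpos by (smt (verit) mult_nonneg_nonneg norm_ge_zero)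
  define \<epsilon> where "\<epsilon> = 1 / (2 * R)"
  have e: "\<epsilon> > 0" unfolding \<epsilon>_def using R by simp
  obtain C where C: "\<And>n. norm (pw q n) \<le> C * \<epsilon>^n" using qn e unfolding qnil_dec dec_def by blast
  have "norm s \<le> (K * K * norm one * norm s * C) * (1/2)^n" for n
  proof -
    have a: "norm (pw y n) \<le> norm one * R^n"
      using norm_pw[of y n] R Kpos unfolding R_def
      by (smt (verit) mult_left_mono norm_ge_zero power_mono zero_le_mult_iff)
    have "norm s \<le> K * (K * norm (pw y n) * norm s) * norm (pw q n)" by (rule eq)
    also have "\<dots> \<le> K * (K * (norm one * R^n) * norm s) * (C * \<epsilon>^n)"
      using a C[of n] Kpos R by (intro mult_mono mult_left_mono mult_right_mono) auto
    also have "\<dots> = (K * K * norm one * norm s * C) * (R * \<epsilon>)^n"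
      by (simp add: power_mult_distrib algebra_simps)
    also have "R * \<epsilon> = 1/2" unfolding \<epsilon>_def using R by simp
    finally show ?thesis .
  qed
  thus ?thesis using zero_of_bound[of "norm s" "K * K * norm one * norm s * C"] by simp
qed

lemma iter_zero:
  assumes qn: "qnil q" and eq: "s = mul (mul y s) q"
  shows "s = 0"
proof (rule bound_zero[OF qn])
  fix n
  have "norm s = norm (mul (mul (pw y n) s) (pw q n))" using iter[OF eq, of n] by simp
  also have "\<dots> \<le> K * norm (mul (pw y n) s) * norm (pw q n)" by (rule normK)
  also have "\<dots> \<le> K * (K * norm (pw y n) * norm s) * norm (pw q n)"
    using Kpos normK by (intro mult_right_mono mult_left_mono) auto
  finally show "norm s \<le> K * (K * norm (pw y n) * norm s) * norm (pw q n)" .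
qed

lemma iter_zero':
  assumes qn: "qnil q" and eq: "s = mul (mul q s) y"
  shows "s = 0"
proof (rule bound_zero[OF qn, of s y])
  fix n
  have "norm s = norm (mul (mul (pw q n) s) (pw y n))" using iter'[OF eq, of n] by simp
  also have "\<dots> \<le> K * norm (mul (pw q n) s) * norm (pw y n)" by (rule normK)
  also have "\<dots> \<le> K * (K * norm (pw q n) * norm s) * norm (pw y n)"
    using Kpos normK by (intro mult_right_mono mult_left_mono) auto
  finally show "norm s \<le> K * (K * norm (pw y n) * norm s) * norm (pw q n)" by (simp add: algebra_simps)
qed

end


context nalg begin

lemma pw2: "pw x 2 = mul x x"
  by (simp add: numeral_2_eq_2 one_r)

lemma gd_comm:
  assumes g: "gd x y" and xw: "mul x w = mul w x"
  shows "mul y w = mul w y"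
proof -
  have h1: "mul y x = mul x y" and h2: "y = mul (mul y x) y" and h3: "qnil (x - mul (pw x 2) y)"
    using g unfolding gd_def by auto
  define r where "r = mul x y"
  define p where "p = one - r"
  have yr: "mul y r = y" unfolding r_def using h2 by (simp add: assoc)
  have ry: "mul r y = y" unfolding r_def using h1 h2 by simp
  have rr: "mul r r = r" unfolding r_def by (simp add: assoc yr[unfolded r_def])
  have xr: "mul x r = mul r x" unfolding r_def by (simp add: assoc h1)
  have yx: "mul y x = r" unfolding r_def by (rule h1)
  have rp: "mul r p = 0" unfolding p_def by (simp add: diffl one_r rr)
  have pr: "mul p r = 0" unfolding p_def by (simp add: diffr one_l rr)
  have pp: "mul p p = p" unfolding p_def by (simp add: diffl diffr one_l one_r rr)
  have xp: "mul x p = mul p x" unfolding p_def by (simp add: diffl diffr one_l one_r xr)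
  have q: "x - mul (pw x 2) y = mul x p" unfolding p_def r_def pw2
    by (simp add: diffl one_r assoc)
  have qn: "qnil (mul x p)" using h3 q by simp
  define s where "s = mul (mul r w) p"
  have "mul (mul y s) (mul x p) = mul (mul (mul y r) w) (mul p (mul x p))"
    unfolding s_def by (simp add: assoc)
  also have "mul p (mul x p) = mul x p" by (metis assoc pp xp)
  also have "mul (mul (mul y r) w) (mul x p) = mul y (mul (mul w x) p)"
    by (simp add: yr assoc)
  also have "\<dots> = mul (mul y x) (mul w p)" by (simp add: xw[symmetric] assoc)
  also have "\<dots> = s" unfolding s_def yx by (simp add: assoc)
  finally have s0: "s = 0" using iter_zero[OF qn] by metis
  define t where "t = mul (mul p w) r"
  have "mul (mul (mul x p) t) y = mul (mul x (mul p p)) (mul w (mul r y))"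
    unfolding t_def by (simp add: assoc)
  also have "\<dots> = mul (mul x p) (mul w y)" by (simp add: pp ry)
  also have "\<dots> = mul p (mul (mul x w) y)" by (simp add: xp assoc)
  also have "\<dots> = mul p (mul w (mul x y))" by (simp add: xw assoc)
  also have "\<dots> = t" unfolding t_def r_def by (simp add: assoc)
  finally have t0: "t = 0" using iter_zero'[OF qn] by metis
  have rp1: "r + p = one" unfolding p_def by simp
  have w: "w = mul r (mul w r) + mul p (mul w p)"
  proof -
    have "w = mul (r + p) (mul w (r + p))" by (simp add: rp1 one_l one_r)
    also have "\<dots> = mul r (mul w r) + mul (mul r w) p + mul (mul p w) r + mul p (mul w p)"
      by (simp add: distl distr assoc)
    finally show ?thesis using s0 t0 unfolding s_def t_def by simp
  qed
  have rw: "mul r w = mul w r"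
  proof -
    have "mul r w = mul (mul r r) (mul w r) + mul (mul r p) (mul w p)"
      by (subst w) (simp add: distl assoc)
    also have "\<dots> = mul r (mul w r)" by (simp add: rr rp)
    also have "\<dots> = mul (mul r (mul w r)) r + mul (mul p (mul w p)) r"
      by (simp add: assoc rr pr)
    also have "\<dots> = mul w r" by (subst (3) w) (simp add: distr)
    finally show ?thesis .
  qed
  have "mul y w = mul (mul y r) w" by (simp add: yr)
  also have "\<dots> = mul y (mul w r)" by (simp add: assoc rw)
  also have "\<dots> = mul (mul y (mul x w)) y" unfolding r_def by (simp add: assoc xw)
  also have "\<dots> = mul (mul r w) y" by (simp add: assoc yx[symmetric])
  also have "\<dots> = mul w y" by (simp add: rw assoc ry)
  finally show ?thesis .
qed

lemma gd_unique:
  assumes gy: "gd x y" and gz: "gd x z"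
  shows "y = z"
proof -
  have y1: "mul y x = mul x y" and y2: "y = mul (mul y x) y" and y3: "qnil (x - mul (pw x 2) y)"
    using gy unfolding gd_def by auto
  have z1: "mul z x = mul x z" and z2: "z = mul (mul z x) z" and z3: "qnil (x - mul (pw x 2) z)"
    using gz unfolding gd_def by auto
  have yz: "mul y z = mul z y" using gd_comm[OF gy, of z] z1 by simp
  have key: "mul x y = mul (mul x y) (mul x z)"
    if g1: "gd x y" "gd x z" "mul y z = mul z y" for y z
  proof -
    have a1: "mul y x = mul x y" and a2: "y = mul (mul y x) y"
      using g1(1) unfolding gd_def by auto
    have b1: "mul z x = mul x z" and b2: "z = mul (mul z x) z" and b3: "qnil (x - mul (pw x 2) z)"
      using g1(2) unfolding gd_def by auto
    define p where "p = one - mul x z"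
    have q: "x - mul (pw x 2) z = mul x p" unfolding p_def pw2 by (simp add: diffl one_r assoc)
    have qn: "qnil (mul x p)" using b3 q by simp
    have xp: "mul x p = mul p x" unfolding p_def by (simp add: diffl diffr one_l one_r assoc b1)
    have zz: "mul (mul x z) (mul x z) = mul x z" using b2 by (simp add: assoc)
    have pp: "mul p p = p" unfolding p_def by (simp add: diffl diffr one_l one_r zz)
    define e where "e = mul (mul x y) p"
    have yr: "mul y (mul x y) = y" using a2 by (simp add: assoc)
    have "mul (mul y e) (mul x p) = mul y (mul (mul x y) (mul p (mul x p)))"
      unfolding e_def by (simp add: assoc)
    also have "mul p (mul x p) = mul x p" by (metis assoc pp xp)
    also have "mul y (mul (mul x y) (mul x p)) = mul (mul (mul y (mul x y)) x) p"
      by (simp add: assoc)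
    also have "\<dots> = e" unfolding e_def yr a1 ..
    finally have "e = 0" using iter_zero[OF qn] by metis
    thus ?thesis unfolding e_def p_def by (simp add: diffl one_r)
  qed
  have k1: "mul x y = mul (mul x y) (mul x z)" by (rule key[OF gy gz yz])
  have k2: "mul x z = mul (mul x z) (mul x y)" by (rule key[OF gz gy yz[symmetric]])
  have "mul (mul x y) (mul x z) = mul x (mul (mul y x) z)" by (simp add: assoc)
  also have "\<dots> = mul x (mul x (mul y z))" by (simp add: y1 assoc)
  also have "\<dots> = mul x (mul x (mul z y))" by (simp add: yz)
  also have "\<dots> = mul x (mul (mul z x) y)" by (simp add: z1 assoc)
  also have "\<dots> = mul (mul x z) (mul x y)" by (simp add: assoc)
  finally have xyz: "mul x y = mul x z" using k1 k2 by simp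
  have "y = mul (mul x y) y" using y1 y2 by simp
  also have "\<dots> = mul z (mul x y)" by (simp add: xyz assoc flip: z1)
  also have "\<dots> = mul z (mul x z)" by (simp add: xyz)
  also have "\<dots> = z" using z2 by (simp add: assoc)
  finally show ?thesis .
qed

end


lemma dec_mono: "dec f \<Longrightarrow> (\<And>n. g n \<le> f n) \<Longrightarrow> dec g"
  unfolding dec_def by (meson order_trans)

lemma dec_add: "dec f \<Longrightarrow> dec g \<Longrightarrow> dec (\<lambda>n. f n + g n)"
  unfolding dec_def
proof (intro allI impI)
  fix \<epsilon> :: real assume "\<forall>\<epsilon>>0. \<exists>C. \<forall>n. f n \<le> C * \<epsilon> ^ n" "\<forall>\<epsilon>>0. \<exists>C. \<forall>n. g n \<le> C * \<epsilon> ^ n" "0 < \<epsilon>"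
  then obtain C1 C2 where "\<And>n. f n \<le> C1 * \<epsilon>^n" "\<And>n. g n \<le> C2 * \<epsilon>^n" by blast
  hence "\<forall>n. f n + g n \<le> (C1 + C2) * \<epsilon>^n" by (simp add: distrib_right add_mono)
  thus "\<exists>C. \<forall>n. f n + g n \<le> C * \<epsilon> ^ n" by blast
qed

lemma dec_cmult: "dec f \<Longrightarrow> c \<ge> 0 \<Longrightarrow> dec (\<lambda>n. c * f n)"
  unfolding dec_def
proof (intro allI impI)
  fix \<epsilon> :: real assume "\<forall>\<epsilon>>0. \<exists>C. \<forall>n. f n \<le> C * \<epsilon> ^ n" "c \<ge> 0" "0 < \<epsilon>"
  then obtain C where C: "\<And>n. f n \<le> C * \<epsilon>^n" by blast
  have "\<forall>n. c * f n \<le> (c * C) * \<epsilon>^n" using C \<open>c \<ge> 0\<close>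
    by (metis mult.assoc mult_left_mono)
  thus "\<exists>C. \<forall>n. c * f n \<le> C * \<epsilon> ^ n" by blast
qed

lemma dec_Suc: "dec f \<Longrightarrow> dec (\<lambda>n. f (Suc n))"
  unfolding dec_def
proof (intro allI impI)
  fix \<epsilon> :: real assume "\<forall>\<epsilon>>0. \<exists>C. \<forall>n. f n \<le> C * \<epsilon> ^ n" "0 < \<epsilon>"
  then obtain C where C: "\<And>n. f n \<le> C * \<epsilon>^n" by blast
  have "\<forall>n. f (Suc n) \<le> (C * \<epsilon>) * \<epsilon>^n" using C by (metis power_Suc mult.assoc)
  thus "\<exists>C. \<forall>n. f (Suc n) \<le> C * \<epsilon> ^ n" by blast
qed

lemma dec_unSuc: "dec (\<lambda>n. f (Suc n)) \<Longrightarrow> dec f"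
  unfolding dec_def
proof (intro allI impI)
  fix \<epsilon> :: real assume "\<forall>\<epsilon>>0. \<exists>C. \<forall>n. f (Suc n) \<le> C * \<epsilon> ^ n" and e: "0 < \<epsilon>"
  then obtain C where C: "\<And>n. f (Suc n) \<le> C * \<epsilon>^n" by blast
  define C' where "C' = max (C / \<epsilon>) (f 0)"
  have "f n \<le> C' * \<epsilon>^n" for n
  proof (cases n)
    case 0 then show ?thesis unfolding C'_def by simp
  next
    case (Suc m)
    have "f n \<le> C * \<epsilon>^m" using C Suc by simp
    also have "\<dots> = (C / \<epsilon>) * \<epsilon>^n" using Suc e by simp
    also have "\<dots> \<le> C' * \<epsilon>^n" unfolding C'_def using e by (intro mult_right_mono) auto
    finally show ?thesis .
  qed
  thus "\<exists>C. \<forall>n. f n \<le> C * \<epsilon> ^ n" by blast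
qed

context nalg begin

lemma pw_sum:
  assumes TS: "mul T S = 0" and SS: "mul S S = 0"
  shows "pw (T + S) (Suc n) = pw T (Suc n) + mul S (pw T n)"
proof (induction n)
  case 0 then show ?case by (simp add: distr one_r)
next
  case (Suc n)
  have "pw (T + S) (Suc (Suc n)) = mul (T + S) (pw T (Suc n) + mul S (pw T n))"
    using Suc by simp
  also have "\<dots> = pw T (Suc (Suc n)) + mul (mul T S) (pw T n) + mul S (pw T (Suc n))
     + mul (mul S S) (pw T n)"
    by (simp add: distl distr assoc)
  also have "\<dots> = pw T (Suc (Suc n)) + mul S (pw T (Suc n))" by (simp add: TS SS)
  finally show ?case .
qed

lemma qnil_sum:
  assumes TS: "mul T S = 0" and SS: "mul S S = 0" and qT: "qnil T"
  shows "qnil (T + S)"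
  unfolding qnil_dec
proof (rule dec_unSuc)
  have dT: "dec (\<lambda>n. norm (pw T n))" using qT qnil_dec by simp
  have "dec (\<lambda>n. norm (pw T (Suc n)) + (K * norm S) * norm (pw T n))"
    using Kpos by (intro dec_add dec_Suc dec_cmult dT) auto
  moreover have "norm (pw (T + S) (Suc n)) \<le> norm (pw T (Suc n)) + (K * norm S) * norm (pw T n)" for n
    unfolding pw_sum[OF TS SS] using normK[of S "pw T n"]
    by (smt (verit) norm_triangle_ineq)
  ultimately show "dec (\<lambda>n. norm (pw (T + S) (Suc n)))" by (rule dec_mono)
qed

end

lemma norm4: "norm (a, b, c, d) \<le> norm a + norm b + norm c + norm d"
  by (smt (verit) norm_Pair_le)

lemma norm4_comp:
  fixes a b c d :: "'a::real_normed_vector"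
  shows "norm a \<le> norm (a, b, c, d)" "norm b \<le> norm (a, b, c, d)"
    "norm c \<le> norm (a, b, c, d)" "norm d \<le> norm (a, b, c, d)"
proof -
  show "norm a \<le> norm (a, b, c, d)" by (rule norm_fst_le)
  show "norm b \<le> norm (a, b, c, d)" by (meson norm_fst_le norm_snd_le order_trans)
  show "norm c \<le> norm (a, b, c, d)"
    using norm_fst_le[of c d] norm_snd_le[of "(c,d)" b] norm_snd_le[of "(b,c,d)" a] by linarith
  show "norm d \<le> norm (a, b, c, d)"
    using norm_snd_le[of d c] norm_snd_le[of "(c,d)" b] norm_snd_le[of "(b,c,d)" a] by linarith
qed

lemma nalg_m2: "nalg (m2mult :: 'a::real_normed_algebra_1 mat2 \<Rightarrow> _) m2one 8"
proof
  fix x y z :: "'a mat2"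
  show "m2mult (m2mult x y) z = m2mult x (m2mult y z)"
    by (cases x rule: prod_cases4; cases y rule: prod_cases4; cases z rule: prod_cases4)
      (simp add: algebra_simps)
  show "m2mult m2one x = x" "m2mult x m2one = x"
    by (cases x rule: prod_cases4; simp add: m2one_def)+
  show "m2mult x (y + z) = m2mult x y + m2mult x z" "m2mult (x + y) z = m2mult x z + m2mult y z"
    by (cases x rule: prod_cases4; cases y rule: prod_cases4; cases z rule: prod_cases4;
        simp add: algebra_simps)+
  show "(0::real) < 8" by simp
  show "norm (m2mult x y) \<le> 8 * norm x * norm y"
  proof (cases x rule: prod_cases4)
    case (fields a b c d)
    show ?thesis
    proof (cases y rule: prod_cases4)
      case (fields e f g h)
      let ?X = "norm x" and ?Y = "norm y"
      have bx: "norm a \<le> ?X" "norm b \<le> ?X" "norm c \<le> ?X" "norm d \<le> ?X"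
        using norm4_comp[where a=a and b=b and c=c and d=d] \<open>x = _\<close> by auto
      have by': "norm e \<le> ?Y" "norm f \<le> ?Y" "norm g \<le> ?Y" "norm h \<le> ?Y"
        using norm4_comp[where a=e and b=f and c=g and d=h] \<open>y = _\<close> by auto
      have ent: "norm (p * q + r * s) \<le> 2 * (?X * ?Y)"
        if "norm p \<le> ?X" "norm q \<le> ?Y" "norm r \<le> ?X" "norm s \<le> ?Y" for p q r s :: 'a
      proof -
        have "norm (p * q + r * s) \<le> norm p * norm q + norm r * norm s"
          by (smt (verit) norm_mult_ineq norm_triangle_ineq)
        also have "\<dots> \<le> ?X * ?Y + ?X * ?Y"
          using that by (intro add_mono mult_mono) auto
        finally show ?thesis by simp
      qed
      have "norm (m2mult x y) \<le> norm (a * e + b * g) + norm (a * f + b * h)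
          + norm (c * e + d * g) + norm (c * f + d * h)"
        using \<open>x = _\<close> \<open>y = _\<close> norm4 by simp
      also have "\<dots> \<le> 2 * (?X * ?Y) + 2 * (?X * ?Y) + 2 * (?X * ?Y) + 2 * (?X * ?Y)"
        using bx by' by (intro add_mono ent) auto
      finally show ?thesis by simp
    qed
  qed
qed

lemma nalg_alg: "nalg ((*) :: 'a::real_normed_algebra_1 \<Rightarrow> _) 1 1"
  by unfold_locales (auto simp: algebra_simps norm_mult_ineq)

interpretation m2: nalg "m2mult :: 'a::real_normed_algebra_1 mat2 \<Rightarrow> _" m2one 8
  by (rule nalg_m2)

interpretation al: nalg "(*) :: 'a::real_normed_algebra_1 \<Rightarrow> _" 1 1
  by (rule nalg_alg)

lemma m2pw: "m2.pw X n = m2pow X n"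
  by (induction n) auto

lemma alpw: "al.pw x n = x ^ n"
  by (induction n) auto

lemma m2gd: "m2.gd X Y \<longleftrightarrow> m2_is_gdrazin_inv X Y"
  unfolding m2.gd_def m2_is_gdrazin_inv_def m2.qnil_def m2_quasinilpotent_def m2pw ..

lemma m2qnil: "m2.qnil X \<longleftrightarrow> m2_quasinilpotent X"
  unfolding m2.qnil_def m2_quasinilpotent_def m2pw ..

lemma alqnil: "al.qnil x \<longleftrightarrow> quasinilpotent x"
  unfolding al.qnil_def quasinilpotent_def alpw ..

lemma algd: "al.gd x y \<longleftrightarrow> is_gdrazin_inv x y"
  unfolding al.gd_def is_gdrazin_inv_def alqnil alpw ..

lemma gdrazin_spec:
  assumes "gdrazin_invertible x" shows "is_gdrazin_inv x (gdrazin x)"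
proof -
  obtain y where y: "is_gdrazin_inv x y" using assms gdrazin_invertible_def by blast
  have "is_gdrazin_inv x (THE y. is_gdrazin_inv x y)"
    by (rule theI[of _ y]) (use y al.gd_unique in \<open>auto simp: algd\<close>)
  thus ?thesis unfolding gdrazin_def .
qed

lemma m2_gdrazin_eq:
  assumes "m2_is_gdrazin_inv X Y" shows "m2_gdrazin X = Y"
  unfolding m2_gdrazin_def
proof (rule the_equality)
  show "m2_is_gdrazin_inv X Y" by (rule assms)
  fix Z assume "m2_is_gdrazin_inv X Z"
  thus "Z = Y" using assms m2.gd_unique unfolding m2gd[symmetric] by blast
qed



lemma suc_le_pow2: "Suc n \<le> 2 ^ n"
  by (induction n) auto
lemma scaleC_power:
  fixes u :: "'a::complex_banach_algebra_1"
  shows "(c *\<^sub>C u) ^ n = (c ^ n) *\<^sub>C (u ^ n)"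
proof (induction n)
  case 0 then show ?case by (simp add: scaleC_one)
next
  case (Suc n)
  have "(c *\<^sub>C u) ^ Suc n = (c *\<^sub>C u) * (c ^ n *\<^sub>C u ^ n)" using Suc by simp
  also have "\<dots> = c *\<^sub>C (c ^ n *\<^sub>C (u * u ^ n))"
    by (metis mult_scaleC_left mult_scaleC_right scaleC_scaleC mult.commute)
  also have "\<dots> = c ^ Suc n *\<^sub>C u ^ Suc n" by (simp only: scaleC_scaleC power_Suc)
  finally show ?case .
qed
lemma qnil_scaleC:
  fixes u :: "'a::complex_banach_algebra_1"
  assumes "quasinilpotent u"
  shows "quasinilpotent (c *\<^sub>C u)"
proof -
  have du: "dec (\<lambda>n. norm (u ^ n))"
    using assms unfolding alqnil[symmetric] al.qnil_dec alpw .
  have "dec (\<lambda>n. norm ((c *\<^sub>C u) ^ n))"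
    unfolding dec_def
  proof (intro allI impI)
    fix \<epsilon> :: real assume e: "\<epsilon> > 0"
    define R where "R = cmod c + 1"
    have R: "R > 0" unfolding R_def by (smt (verit) norm_ge_zero)
    obtain C where C: "\<And>n. norm (u ^ n) \<le> C * (\<epsilon> / R)^n"
      using du e R unfolding dec_def by (metis divide_pos_pos)
    have "norm ((c *\<^sub>C u) ^ n) \<le> C * \<epsilon>^n" for n
    proof -
      have C0: "C * (\<epsilon> / R)^n \<ge> 0" using C[of n] by (smt (verit) norm_ge_zero)
      have "norm ((c *\<^sub>C u) ^ n) = cmod c ^ n * norm (u ^ n)"
        unfolding scaleC_power norm_scaleC norm_power ..
      also have "\<dots> \<le> R ^ n * (C * (\<epsilon> / R)^n)"
        using C[of n] C0 unfolding R_def by (intro mult_mono power_mono) auto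
      also have "\<dots> = C * \<epsilon>^n" using R by (simp add: power_divide)
      finally show ?thesis .
    qed
    thus "\<exists>C. \<forall>n. norm ((c *\<^sub>C u) ^ n) \<le> C * \<epsilon>^n" by blast
  qed
  thus ?thesis unfolding alqnil[symmetric] al.qnil_dec alpw .
qed

lemma tri_pow:
  fixes u b v :: "'a::real_normed_algebra_1"
  shows "m2pow (u, b, 0, v) n = (u ^ n, (\<Sum>k<n. u ^ k * b * v ^ (n - Suc k)), 0, v ^ n)"
proof (induction n)
  case 0 then show ?case by (simp add: m2one_def)
next
  case (Suc n)
  have "(\<Sum>k<Suc n. u ^ k * b * v ^ (Suc n - Suc k))
      = b * v ^ n + (\<Sum>k<n. u * (u ^ k * b * v ^ (n - Suc k)))"
    by (subst sum.lessThan_Suc_shift) (simp add: mult.assoc)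
  also have "\<dots> = u * (\<Sum>k<n. u ^ k * b * v ^ (n - Suc k)) + b * v ^ n"
    by (simp add: sum_distrib_left)
  finally show ?case using Suc by simp
qed

lemma tri_qnil:
  fixes u b v :: "'a::real_normed_algebra_1"
  assumes qu: "quasinilpotent u" and qv: "quasinilpotent v"
  shows "m2_quasinilpotent (u, b, 0, v)"
proof -
  have du: "dec (\<lambda>n. norm (u ^ n))" using qu unfolding alqnil[symmetric] al.qnil_dec alpw .
  have dv: "dec (\<lambda>n. norm (v ^ n))" using qv unfolding alqnil[symmetric] al.qnil_dec alpw .
  define w where "w n = (\<Sum>k<n. u ^ k * b * v ^ (n - Suc k))" for n
  have dw: "dec (\<lambda>n. norm (w (Suc n)))"
    unfolding dec_def
  proof (intro allI impI)
    fix \<epsilon> :: real assume e: "\<epsilon> > 0"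
    obtain C1 where C1: "\<And>n. norm (u ^ n) \<le> C1 * (\<epsilon> / 2)^n"
      using du e unfolding dec_def by (meson half_gt_zero)
    obtain C2 where C2: "\<And>n. norm (v ^ n) \<le> C2 * (\<epsilon> / 2)^n"
      using dv e unfolding dec_def by (meson half_gt_zero)
    have c1: "C1 \<ge> 0" using C1[of 0] by (metis norm_ge_zero order_trans power_0 mult_1_right)
    have c2: "C2 \<ge> 0" using C2[of 0] by (metis norm_ge_zero order_trans power_0 mult_1_right)
    have "norm (w (Suc n)) \<le> (C1 * norm b * C2) * \<epsilon>^n" for n
    proof -
      have t: "norm (u ^ k * b * v ^ (n - k)) \<le> C1 * norm b * C2 * (\<epsilon>/2)^n" if "k \<le> n" for k
      proof -
        have "norm (u ^ k * b * v ^ (n - k)) \<le> norm (u ^ k) * norm b * norm (v ^ (n - k))"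
          by (smt (verit) mult_right_mono norm_ge_zero norm_mult_ineq)
        also have "\<dots> \<le> (C1 * (\<epsilon> / 2)^k) * norm b * (C2 * (\<epsilon> / 2)^(n - k))"
          using C1[of k] C2[of "n-k"] c1 e by (intro mult_mono mult_right_mono) auto
        also have "\<dots> = C1 * norm b * C2 * ((\<epsilon>/2)^k * (\<epsilon>/2)^(n - k))" by simp
        also have "(\<epsilon>/2)^k * (\<epsilon>/2)^(n - k) = (\<epsilon>/2)^n"
          using that by (simp flip: power_add)
        finally show ?thesis .
      qed
      have "norm (w (Suc n)) \<le> (\<Sum>k<Suc n. norm (u ^ k * b * v ^ (n - k)))"
        unfolding w_def by (simp del: sum.lessThan_Suc add: norm_sum)
      also have "\<dots> \<le> (\<Sum>k<Suc n. C1 * norm b * C2 * (\<epsilon>/2)^n)"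
        by (intro sum_mono t) auto
      also have "\<dots> = real (Suc n) * (C1 * norm b * C2 * (\<epsilon>/2)^n)" by simp
      also have "\<dots> \<le> 2 ^ n * (C1 * norm b * C2 * (\<epsilon>/2)^n)"
      proof (rule mult_right_mono)
        show "real (Suc n) \<le> 2 ^ n" using suc_le_pow2[of n]
          by (metis of_nat_le_iff of_nat_numeral of_nat_power)
        show "0 \<le> C1 * norm b * C2 * (\<epsilon>/2)^n" using c1 c2 e by simp
      qed
      also have "\<dots> = (C1 * norm b * C2) * \<epsilon>^n" by (simp add: power_divide)
      finally show ?thesis .
    qed
    thus "\<exists>C. \<forall>n. norm (w (Suc n)) \<le> C * \<epsilon>^n" by blast
  qed
  have "dec (\<lambda>n. norm (m2pow (u, b, 0, v) n))"
  proof (rule dec_unSuc, rule dec_mono)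
    show "dec (\<lambda>n. norm (u ^ Suc n) + norm (w (Suc n)) + norm (v ^ Suc n))"
      by (intro dec_add dec_Suc du dv dw)
    fix n
    show "norm (m2pow (u, b, 0, v) (Suc n)) \<le> norm (u ^ Suc n) + norm (w (Suc n)) + norm (v ^ Suc n)"
      unfolding tri_pow w_def[symmetric] using norm4[of "u ^ Suc n" "w (Suc n)" 0 "v ^ Suc n"] by simp
  qed
  thus ?thesis unfolding m2qnil[symmetric] m2.qnil_dec m2pw .
qed



lemma m2pow_diag: "m2pow ((a::'a::real_normed_algebra_1), 0, 0, d) k = (a ^ k, 0, 0, d ^ k)"
  by (induction k) (auto simp: m2one_def)

lemma scaleC_zero_right[simp]: "c *\<^sub>C (0::'a::complex_banach_algebra_1) = 0"
  using scaleC_add_right[of c "0::'a" 0] by simp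

theorem corollary3p4:
  fixes A B C D :: "'a::complex_banach_algebra_1" and lam :: complex
  assumes "lam \<noteq> 0"
    and "gdrazin_invertible A" and "gdrazin_invertible D"
    and "A * B = lam *\<^sub>C (spec_idem A * B * D)"
    and "D * C = 0" and "B * C = 0"
  defines "M \<equiv> (A, B, C, D)"
    and "Q \<equiv> (0, B, C, 0)"
    and "Pd \<equiv> (gdrazin A, 0, 0, gdrazin D)"
  shows "m2_gdrazin_invertible M \<and>
    summable (\<lambda>n. m2mult (m2mult (m2pow M n) Q) (m2pow Pd (n + 2))) \<and>
    m2_gdrazin M = Pd + (\<Sum>n. m2mult (m2mult (m2pow M n) Q) (m2pow Pd (n + 2)))"
proof -
  note lam = assms(1) and hyp = assms(4) and DC = assms(5) and BC = assms(6)
  define e where "e = gdrazin A"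
  define f where "f = gdrazin D"
  have ge: "is_gdrazin_inv A e" unfolding e_def by (rule gdrazin_spec[OF assms(2)])
  have gf: "is_gdrazin_inv D f" unfolding f_def by (rule gdrazin_spec[OF assms(3)])
  have eA: "e * A = A * e" and eAe: "e = e * A * e" and qu0: "quasinilpotent (A - A\<^sup>2 * e)"
    using ge unfolding is_gdrazin_inv_def by auto
  have fD: "f * D = D * f" and fDf: "f = f * D * f" and qv0: "quasinilpotent (D - D\<^sup>2 * f)"
    using gf unfolding is_gdrazin_inv_def by auto
  have eAz: "e * (A * z) = A * (e * z)" for z by (simp add: eA flip: mult.assoc)
  have fDz: "f * (D * z) = D * (f * z)" for z by (simp add: fD flip: mult.assoc)
  have Aee: "A * (e * e) = e"
  proof -
    have "A * (e * e) = e * A * e" by (simp add: eA mult.assoc)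
    thus ?thesis using eAe by simp
  qed
  have Aeez: "A * (e * (e * z)) = e * z" for z
  proof -
    have "A * (e * (e * z)) = (A * (e * e)) * z" by (simp add: mult.assoc)
    thus ?thesis by (simp only: Aee)
  qed
  have Dff: "D * (f * f) = f"
  proof -
    have "D * (f * f) = f * D * f" by (simp add: fD mult.assoc)
    thus ?thesis using fDf by simp
  qed
  have Dffz: "D * (f * (f * z)) = f * z" for z
  proof -
    have "D * (f * (f * z)) = (D * (f * f)) * z" by (simp add: mult.assoc)
    thus ?thesis by (simp only: Dff)
  qed
  have DCz: "D * (C * z) = 0" for z by (simp add: DC flip: mult.assoc)
  have BCz: "B * (C * z) = 0" for z by (simp add: BC flip: mult.assoc)
  have fC: "f * C = 0"
  proof -
    have "f * C = D * (f * f) * C" by (simp only: Dff)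
    also have "\<dots> = f * (f * (D * C))" by (simp add: mult.assoc fDz)
    finally show ?thesis by (simp add: DC)
  qed
  have fCz: "f * (C * z) = 0" for z by (simp add: fC flip: mult.assoc)
  have e_pi: "e * spec_idem A = 0"
  proof -
    have eAe': "e * (A * e) = e" using eAe by (simp add: mult.assoc)
    show ?thesis unfolding spec_idem_def e_def[symmetric] by (simp add: right_diff_distrib eAe')
  qed
  have "e * (A * B) = 0" using hyp e_pi by (simp add: mult_scaleC_right mult.assoc[symmetric])
  hence AeB: "A * (e * B) = 0" using eAz[of B] by simp
  have "e * B = A * (e * (e * B))" by (simp add: Aeez)
  also have "\<dots> = e * (A * (e * B))" by (simp add: eA flip: mult.assoc)
  finally have eB: "e * B = 0" by (simp add: AeB)
  have eBz: "e * (B * z) = 0" for z by (simp add: eB flip: mult.assoc)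
  have piB: "spec_idem A * B = B"
    unfolding spec_idem_def e_def[symmetric] by (simp add: left_diff_distrib mult.assoc eB)
  have hyp2: "A * B = lam *\<^sub>C (B * D)" using hyp piB by simp
  define u where "u = A - A * (A * e)"
  have uq: "quasinilpotent u" using qu0 unfolding u_def by (simp add: power2_eq_square mult.assoc)
  define v where "v = D - D * (D * f)"
  have vq: "quasinilpotent v" using qv0 unfolding v_def by (simp add: power2_eq_square mult.assoc)
  have Bf: "B * f = 0"
  proof (rule al.iter_zero'[of "inverse lam *\<^sub>C u" "B * f" f])
    show "al.qnil (inverse lam *\<^sub>C u)" unfolding alqnil by (rule qnil_scaleC[OF uq])
    have uB: "u * B = A * B" unfolding u_def by (simp add: left_diff_distrib mult.assoc eB)
    have "(inverse lam *\<^sub>C u) * (B * f) * f = inverse lam *\<^sub>C (u * B * (f * f))"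
      by (simp add: mult_scaleC_left mult.assoc)
    also have "\<dots> = inverse lam *\<^sub>C (lam *\<^sub>C (B * D * (f * f)))"
      unfolding uB hyp2 by (simp add: mult_scaleC_left)
    also have "\<dots> = B * f" using lam by (simp add: scaleC_scaleC scaleC_one mult.assoc Dff)
    finally show "B * f = (inverse lam *\<^sub>C u) * (B * f) * f" by simp
  qed
  have Bfz: "B * (f * z) = 0" for z by (simp add: Bf flip: mult.assoc)
  have BDf: "B * (D * f) = 0" by (simp add: Bf flip: fD mult.assoc)
  have BDfz: "B * (D * (f * z)) = 0" for z
  proof -
    have "B * (D * (f * z)) = (B * (D * f)) * z" by (simp add: mult.assoc)
    thus ?thesis by (simp add: BDf)
  qed
  note rules = mult.assoc eA eAz Aee Aeez fD fDz Dff Dffz DCz BCz fC fCz eB eBz Bf Bfz BDf BDfz DC BC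
  define X where "X = (e, 0::'a, C * (e * e), f)"
  define Z0 where "Z0 = (0::'a, 0::'a, C * (e * e), 0::'a)"
  have Pdk: "m2pow Pd k = (e ^ k, 0, 0, f ^ k)" for k
    unfolding Pd_def e_def[symmetric] f_def[symmetric] by (rule m2pow_diag)
  have tm: "m2mult (m2mult (m2pow M n) Q) (m2pow Pd (n + 2)) = (if n = 0 then Z0 else 0)" for n
  proof -
    have QP: "m2mult Q (m2pow Pd (n + 2)) = (0, 0, C * e ^ (n + 2), 0)"
      unfolding Pdk Q_def by (simp add: Bfz)
    show ?thesis
    proof (cases n)
      case 0
      have "m2mult (m2mult (m2pow M n) Q) (m2pow Pd (n + 2)) = m2mult Q (m2pow Pd (n + 2))"
        unfolding 0 m2pow.simps(1) m2.one_l ..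
      also have "\<dots> = (0, 0, C * e ^ (n + 2), 0)" by (rule QP)
      also have "\<dots> = Z0" unfolding 0 Z0_def by (simp add: power2_eq_square)
      finally show ?thesis using 0 by simp
    next
      case (Suc m)
      have MZ: "m2mult M (0, 0, C * e ^ (n + 2), 0) = 0"
        unfolding M_def by (simp add: BCz DCz zero_prod_def)
      have Mn: "m2pow M n = m2mult (m2pow M m) M" using m2.pw_Suc2[of M m] unfolding m2pw Suc .
      have "m2mult (m2mult (m2pow M n) Q) (m2pow Pd (n + 2))
          = m2mult (m2pow M n) (m2mult Q (m2pow Pd (n + 2)))" by (rule m2.assoc)
      also have "\<dots> = m2mult (m2mult (m2pow M m) M) (0, 0, C * e ^ (n + 2), 0)"
        by (simp only: QP Mn)
      also have "\<dots> = m2mult (m2pow M m) (m2mult M (0, 0, C * e ^ (n + 2), 0))" by (rule m2.assoc)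
      also have "\<dots> = 0" by (simp only: MZ m2.zero_r)
      finally show ?thesis using Suc by simp
    qed
  qed
  have sums: "(\<lambda>n. m2mult (m2mult (m2pow M n) Q) (m2pow Pd (n + 2))) sums Z0"
    unfolding tm using sums_single[of 0 "\<lambda>_. Z0"] by simp
  have PZ: "Pd + Z0 = X" unfolding Pd_def Z0_def X_def e_def f_def by simp
  have c1: "m2mult X M = m2mult M X"
    unfolding X_def M_def by (simp add: rules ring_distribs)
  have c2: "X = m2mult (m2mult X M) X"
    unfolding X_def M_def by (simp add: rules ring_distribs)
  define c' where "c' = C - C * (A * e)"
  have N: "M - m2mult (m2pow M 2) X = (u, B, 0, v) + (0, 0, c', 0)"
    unfolding X_def M_def u_def v_def c'_def
    by (simp add: rules ring_distribs numeral_2_eq_2 m2one_def)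
  have TS: "m2mult (u, B, 0, v) (0, 0, c', 0) = 0"
    unfolding u_def v_def c'_def by (simp add: rules ring_distribs zero_prod_def)
  have SS: "m2mult (0, 0, c', 0) (0::'a, 0::'a, c', 0::'a) = 0"
    by (simp add: zero_prod_def)
  have "m2.qnil ((u, B, 0, v) + (0, 0, c', 0))"
    by (rule m2.qnil_sum[OF TS SS]) (simp add: m2qnil tri_qnil uq vq)
  hence c3: "m2_quasinilpotent (M - m2mult (m2pow M 2) X)" unfolding N m2qnil .
  have gX: "m2_is_gdrazin_inv M X" unfolding m2_is_gdrazin_inv_def using c1 c2 c3 by simp
  have i1: "m2_gdrazin_invertible M" unfolding m2_gdrazin_invertible_def using gX by blast
  have i2: "summable (\<lambda>n. m2mult (m2mult (m2pow M n) Q) (m2pow Pd (n + 2)))"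
    using sums by (rule sums_summable)
  have i3: "m2_gdrazin M = Pd + (\<Sum>n. m2mult (m2mult (m2pow M n) Q) (m2pow Pd (n + 2)))"
    unfolding m2_gdrazin_eq[OF gX] sums_unique[OF sums, symmetric] PZ ..
  show ?thesis using i1 i2 i3 by blast
qed


end
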